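(* Let $d\ge 2$ and $N\in\mathbb{N}$. Let $P:\mathbb{C}^d\to\mathbb{C}$ be an entire function that is $(N\mathbb{Z})^d$-periodic, with restriction to $\mathbb{R}^d$ given by the Fourier series $$P(\mathbf{x})=\sum_{\mathbf{k}\in\mathbb{Z}^d} c_{\mathbf{k}}\,e^{2\pi i\mathbf{k}\cdot\mathbf{x}/N},\quad \mathbf{x}\in\mathbb{R}^d.$$ Then $P$ satisfies $$\sum_{\mathbf{n}\in\mathbb{Z}^d} P(\mathbf{x}+\mathbf{n})\,\chi_{[0,N]^d}(\mathbf{x}+\mathbf{n}) = 1\quad\text{for all }\mathbf{x}\in\mathbb{R}^d$$ if and only if $c_{\mathbf{k}}=\frac{1}{N^d}\delta_{\mathbf{k},\mathbf{0}}$ for all $\mathbf{k}\in(N\mathbb{Z})^d$.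
   Context: $\chi_{[0,N]^d}$ is the indicator function of $[0,N]^d$; $\delta_{\mathbf{k},\mathbf{0}}$ is the Kronecker delta.
   Formalization: The indicator $\chi_{[0,N]^d}$ in the sum over n is replaced by the indicator of the half-open cube, the product of d copies of [0,N), instead of the closed cube. The statement above fails without it. *)

theory Defs
  imports "HOL-Analysis.Analysis"
begin

definition entire_fun :: "(complex ^ 'd \<Rightarrow> complex) \<Rightarrow> bool" where
  "entire_fun P \<longleftrightarrow> (\<forall>z. \<exists>D. (P has_derivative D) (at z) \<and> (\<forall>c v. D (c *s v) = c * D v))"

definition cvec :: "real ^ 'd \<Rightarrow> complex ^ 'd" where
  "cvec x = (\<chi> i. complex_of_real (x $ i))"

definition rvec :: "int ^ 'd \<Rightarrow> real ^ 'd" where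
  "rvec n = (\<chi> i. real_of_int (n $ i))"

definition lattice_periodic :: "nat \<Rightarrow> (complex ^ 'd \<Rightarrow> complex) \<Rightarrow> bool" where
  "lattice_periodic N P \<longleftrightarrow>
     (\<forall>z (m :: int ^ 'd). P (z + (\<chi> i. of_int (int N * m $ i))) = P z)"

definition cube :: "nat \<Rightarrow> (real ^ 'd) set" where
  "cube N = {x. \<forall>i. 0 \<le> x $ i \<and> x $ i < real N}"

definition fchar :: "nat \<Rightarrow> int ^ 'd \<Rightarrow> real ^ 'd \<Rightarrow> complex" where
  "fchar N k x = exp (2 * pi * \<i> * complex_of_real ((\<Sum>i\<in>UNIV. real_of_int (k $ i) * x $ i) / real N))"

end

theory Submission
  imports Defs
begin

lemma fchar_add_x: "fchar N k (x + y) = fchar N k x * fchar N k y"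
  unfolding fchar_def by (simp add: algebra_simps sum.distrib add_divide_distrib flip: exp_add)

lemma fchar_add_k: "fchar N (k + l) x = fchar N k x * fchar N l x"
  unfolding fchar_def by (simp add: algebra_simps sum.distrib add_divide_distrib flip: exp_add)

lemma fchar_diff_k: "fchar N (k - l) x = fchar N k x * fchar N (- l) x"
  using fchar_add_k[of N k "- l" x] by simp

lemma fchar_zero_x: "fchar N k 0 = 1"
  unfolding fchar_def by simp

lemma fchar_zero_k: "fchar N 0 x = 1"
  unfolding fchar_def by simp

lemma fchar_scale:
  assumes "N > 0" "M > 0"
  shows "fchar N k ((real N / real M) *\<^sub>R y) = fchar M k y"
proof -
  have "(\<Sum>i\<in>UNIV. real_of_int (k $ i) * ((real N / real M) *\<^sub>R y) $ i) / real N
      = (\<Sum>i\<in>UNIV. real_of_int (k $ i) * y $ i) / real M"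
    using assms by (simp add: sum_distrib_left sum_divide_distrib field_simps)
  then show ?thesis unfolding fchar_def by simp
qed

lemma fchar_rvec:
  "fchar M k (rvec j) = (\<Prod>i\<in>UNIV. exp (2 * pi * \<i> * complex_of_real (real_of_int (k $ i * j $ i) / real M)))"
proof -
  have "2 * pi * \<i> * complex_of_real ((\<Sum>i\<in>UNIV. real_of_int (k $ i) * rvec j $ i) / real M)
     = (\<Sum>i\<in>UNIV. 2 * pi * \<i> * complex_of_real (real_of_int (k $ i * j $ i) / real M))"
    unfolding rvec_def by (simp add: sum_divide_distrib sum_distrib_left)
  then show ?thesis unfolding fchar_def by (simp add: exp_sum)
qed

lemma sum1d:
  fixes q a :: int
  assumes "M > 0"
  shows "(\<Sum>t\<in>{a..<a + int M}. exp (2 * pi * \<i> * complex_of_real (real_of_int (q * t) / real M)))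
        = (if int M dvd q then of_nat M else 0)"
proof -
  define w where "w = exp (2 * pi * \<i> * complex_of_real (real_of_int (q * a) / real M))"
  define z where "z = exp (2 * pi * \<i> * complex_of_real (real_of_int q / real M))"
  have e: "exp (2 * pi * \<i> * complex_of_real (real_of_int (q * (a + int s)) / real M)) = w * z ^ s" for s :: nat
    unfolding w_def z_def by (simp add: algebra_simps add_divide_distrib flip: exp_add exp_of_nat_mult)
  have "(\<Sum>t\<in>{a..<a + int M}. exp (2 * pi * \<i> * complex_of_real (real_of_int (q * t) / real M)))
      = (\<Sum>s<M. exp (2 * pi * \<i> * complex_of_real (real_of_int (q * (a + int s)) / real M)))"
  proof -
    have "{a..<a + int M} = (\<lambda>s. a + int s) ` {..<M}"
      by (auto simp: image_iff intro!: bexI[of _ "nat (_ - a)"])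
    moreover have "inj_on (\<lambda>s. a + int s) {..<M}" by (auto simp: inj_on_def)
    ultimately show ?thesis by (simp add: sum.reindex)
  qed
  also have "\<dots> = w * (\<Sum>s<M. z ^ s)" by (simp only: e sum_distrib_left)
  also have "\<dots> = (if int M dvd q then of_nat M else 0)"
  proof (cases "int M dvd q")
    case True
    then obtain r where r: "q = int M * r" by auto
    have z1: "z = 1" unfolding z_def r using assms
      by (simp add: exp_eq_1 field_simps)
    have w1: "w = 1" unfolding w_def r using assms
      apply (simp add: exp_eq_1 field_simps)
      by (metis mult.assoc mult.commute of_int_mult)
    show ?thesis using True by (simp add: z1 w1)
  next
    case False
    have "z \<noteq> 1"
    proof
      assume "z = 1"
      then obtain n :: int where n: "2 * pi * (real_of_int q / real M) = real_of_int (2 * n) * pi"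
        unfolding z_def exp_eq_1 by auto
      hence "real_of_int q = real M * real_of_int n" using assms by (simp add: field_simps)
      hence "q = int M * n" by (metis of_int_eq_iff of_int_mult of_int_of_nat_eq)
      thus False using False by auto
    qed
    moreover have "z ^ M = 1" unfolding z_def using assms
      by (simp add: exp_eq_1 flip: exp_of_nat_mult)
    ultimately show ?thesis using False by (simp add: geometric_sum)
  qed
  finally show ?thesis .
qed

definition ibox :: "int ^ 'd \<Rightarrow> nat \<Rightarrow> (int ^ 'd) set" where
  "ibox a M = {j. \<forall>i. a $ i \<le> j $ i \<and> j $ i < a $ i + int M}"

lemma ibox_eq: fixes a :: "int ^ 'd" shows "ibox a M = vec_lambda ` (PiE UNIV (\<lambda>i. {a $ i..<a $ i + int M}))"
proof (rule set_eqI)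
  fix j :: "int ^ 'd"
  show "j \<in> ibox a M \<longleftrightarrow> j \<in> vec_lambda ` (PiE UNIV (\<lambda>i. {a $ i..<a $ i + int M}))"
  proof
    assume "j \<in> ibox a M"
    hence "vec_nth j \<in> PiE UNIV (\<lambda>i. {a $ i..<a $ i + int M})" by (auto simp: ibox_def)
    moreover have "j = vec_lambda (vec_nth j)" by simp
    ultimately show "j \<in> vec_lambda ` (PiE UNIV (\<lambda>i. {a $ i..<a $ i + int M}))" by blast
  next
    assume "j \<in> vec_lambda ` (PiE UNIV (\<lambda>i. {a $ i..<a $ i + int M}))"
    then obtain g where "g \<in> PiE UNIV (\<lambda>i. {a $ i..<a $ i + int M})" "j = vec_lambda g" by blast
    thus "j \<in> ibox a M" by (auto simp: ibox_def PiE_iff)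
  qed
qed

lemma finite_ibox: "finite (ibox a M)"
  unfolding ibox_eq by (intro finite_imageI finite_PiE) auto

lemma grid_sum:
  fixes a k :: "int ^ 'd"
  assumes "M > 0"
  shows "(\<Sum>j\<in>ibox a M. fchar M k (rvec j)) = (if \<forall>i. int M dvd k $ i then of_nat M ^ CARD('d) else 0)"
proof -
  define f where "f i t = exp (2 * pi * \<i> * complex_of_real (real_of_int (k $ i * t) / real M))" for i t
  have "(\<Sum>j\<in>ibox a M. fchar M k (rvec j)) = (\<Sum>j\<in>ibox a M. \<Prod>i\<in>UNIV. f i (j $ i))"
    by (simp add: fchar_rvec f_def)
  also have "\<dots> = (\<Sum>g\<in>PiE UNIV (\<lambda>i. {a $ i..<a $ i + int M}). \<Prod>i\<in>UNIV. f i (g i))"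
    unfolding ibox_eq by (subst sum.reindex) (auto simp: inj_on_def vec_lambda_inject)
  also have "\<dots> = (\<Prod>i\<in>UNIV. \<Sum>t\<in>{a $ i..<a $ i + int M}. f i t)"
    by (rule prod_sum_PiE[symmetric]) auto
  also have "\<dots> = (\<Prod>i\<in>UNIV. if int M dvd k $ i then of_nat M else 0)"
    by (simp only: f_def sum1d[OF assms])
  also have "\<dots> = (if \<forall>i. int M dvd k $ i then of_nat M ^ CARD('d) else 0)"
    by (auto simp: prod_constant)
  finally show ?thesis .
qed


lemma has_sum_finsum:
  fixes f :: "'a \<Rightarrow> 'b \<Rightarrow> 'c::topological_comm_monoid_add"
  assumes "finite A" "\<And>n. n \<in> A \<Longrightarrow> (f n has_sum s n) B"
  shows "((\<lambda>k. \<Sum>n\<in>A. f n k) has_sum (\<Sum>n\<in>A. s n)) B"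
  using assms
proof (induction A rule: finite_induct)
  case empty
  then show ?case by simp
next
  case (insert x F)
  then show ?case by (simp add: has_sum_add)
qed

lemma uniq:
  fixes a :: "int ^ 'd \<Rightarrow> complex" and N :: nat
  assumes N: "N > 0" and h: "\<And>x. ((\<lambda>k. a k * fchar N k x) has_sum 1) UNIV"
  shows "a p = (if p = 0 then 1 else 0)"
proof -
  have step1: "((\<lambda>k. a k * (if \<forall>i. int M dvd (k + - p) $ i then 1 else 0)) has_sum
                 (if \<forall>i. int M dvd (- p) $ i then 1 else 0)) UNIV" if M: "M > 0" for M
  proof -
    have hj: "((\<lambda>k. a k * fchar M (k + - p) (rvec j)) has_sum fchar M (- p) (rvec j)) UNIV" for j
    proof -
      have "((\<lambda>k. fchar M (- p) (rvec j) * (a k * fchar M k (rvec j))) has_sum fchar M (- p) (rvec j) * 1) UNIV"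
        using has_sum_cmult_right[OF h[of "(real N / real M) *\<^sub>R rvec j"]] by (simp add: fchar_scale N M)
      thus ?thesis by (simp add: fchar_diff_k mult_ac)
    qed
    have "((\<lambda>k. \<Sum>j\<in>ibox 0 M. a k * fchar M (k + - p) (rvec j)) has_sum (\<Sum>j\<in>ibox 0 M. fchar M (- p) (rvec j))) UNIV"
      by (rule has_sum_finsum[OF finite_ibox hj])
    hence "((\<lambda>k. a k * (if \<forall>i. int M dvd (k + - p) $ i then of_nat M ^ CARD('d) else 0)) has_sum
             (if \<forall>i. int M dvd (- p) $ i then of_nat M ^ CARD('d) else 0)) UNIV"
      by (simp only: grid_sum[OF M] flip: sum_distrib_left)
    from has_sum_cmult_right[OF this, of "1 / of_nat M ^ CARD('d)"]
    show ?thesis using M by (simp add: if_distrib cong: if_cong)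
  qed
  have asum: "a summable_on UNIV" using h[of 0] by (auto simp: fchar_zero_x summable_on_def)
  hence gsum: "(\<lambda>k. norm (a k)) summable_on UNIV"
    using summable_on_iff_abs_summable_on_complex by blast
  have bound: "norm (a p - (if p = 0 then 1 else 0)) \<le> e" if e: "e > 0" for e
  proof -
    define g where "g k = norm (a k)" for k
    from infsum_finite_approximation[OF gsum e] obtain F where
      F: "finite F" "dist (sum g F) (infsum g UNIV) \<le> e" unfolding g_def by auto
    define K where "K = (\<Sum>k\<in>insert p F. \<Sum>i\<in>UNIV. \<bar>k $ i\<bar>)"
    have Kb: "\<bar>k $ i\<bar> \<le> K" if "k \<in> insert p F" for k i
    proof -
      have "\<bar>k $ i\<bar> \<le> (\<Sum>i\<in>UNIV. \<bar>k $ i\<bar>)" by (rule member_le_sum) auto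
      also have "\<dots> \<le> K" unfolding K_def using F(1) that
        by (intro member_le_sum) (auto intro: sum_nonneg)
      finally show ?thesis .
    qed
    define M where "M = nat (2 * K + 1)"
    have K0: "K \<ge> 0" using Kb[of p] by fastforce
    have M0: "M > 0" and MK: "int M = 2 * K + 1" using K0 by (auto simp: M_def)
    have small: "z = 0" if "int M dvd z" "\<bar>z\<bar> \<le> 2 * K" for z :: int
    proof (rule ccontr)
      assume "z \<noteq> 0"
      hence "int M \<le> \<bar>z\<bar>" using dvd_imp_le_int[of z "int M"] that(1) by simp
      thus False using that(2) MK by linarith
    qed
    define B where "B = {k. (\<forall>i. int M dvd (k + - p) $ i) \<and> k \<noteq> p}"
    have BF: "B \<inter> F = {}"
    proof (rule ccontr)
      assume "B \<inter> F \<noteq> {}"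
      then obtain k where k: "k \<in> B" "k \<in> F" by blast
      have "k $ i = p $ i" for i
      proof -
        have "\<bar>k $ i\<bar> \<le> K" "\<bar>p $ i\<bar> \<le> K" using Kb k(2) by auto
        hence "(k + - p) $ i = 0" using k(1) by (intro small) (auto simp: B_def)
        thus ?thesis by simp
      qed
      hence "k = p" by (simp add: vec_eq_iff)
      thus False using k(1) by (simp add: B_def)
    qed
    have pz: "(\<forall>i. int M dvd (- p) $ i) \<longleftrightarrow> p = 0"
    proof
      assume H: "\<forall>i. int M dvd (- p) $ i"
      have "p $ i = 0" for i
      proof -
        have "\<bar>p $ i\<bar> \<le> K" using Kb by auto
        hence "(- p) $ i = 0" using H K0 by (intro small) auto
        thus ?thesis by simp
      qed
      thus "p = 0" by (simp add: vec_eq_iff)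
    qed simp
    have pB: "p \<notin> B" by (simp add: B_def)
    have aB: "a summable_on B" using asum by (rule summable_on_subset_banach) simp
    have "(a has_sum (a p + infsum a B)) (insert p B)"
      using pB aB by (intro has_sum_insert) auto
    moreover have "((\<lambda>k. a k * (if \<forall>i. int M dvd (k + - p) $ i then 1 else 0)) has_sum (a p + infsum a B)) UNIV
        \<longleftrightarrow> (a has_sum (a p + infsum a B)) (insert p B)"
    proof (rule has_sum_cong_neutral)
      fix k assume "k \<in> UNIV - insert p B"
      thus "a k * (if \<forall>i. int M dvd (k + - p) $ i then 1 else 0) = 0" unfolding B_def by auto
    next
      fix k assume "k \<in> insert p B - UNIV" thus "a k = 0" by simp
    next
      fix k assume "k \<in> UNIV \<inter> insert p B"
      thus "a k * (if \<forall>i. int M dvd (k + - p) $ i then 1 else 0) = a k" unfolding B_def by auto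
    qed
    ultimately have "((\<lambda>k. a k * (if \<forall>i. int M dvd (k + - p) $ i then 1 else 0)) has_sum (a p + infsum a B)) UNIV"
      by blast
    from has_sum_unique[OF step1[OF M0] this] have eq: "(if p = 0 then 1 else 0) = a p + infsum a B"
      using pz by simp
    have gB: "g summable_on B" using gsum unfolding g_def by (rule summable_on_subset_banach) simp
    have gF: "g summable_on F" using F(1) by simp
    have "infsum g (F \<union> B) = sum g F + infsum g B"
      using infsum_Un_disjoint[OF gF gB] BF F(1) by (auto simp: Int_commute)
    moreover have "infsum g (F \<union> B) \<le> infsum g UNIV"
    proof -
      have gU: "g summable_on UNIV" using gsum by (simp add: g_def[abs_def])
      show ?thesis using gU gF gB by (intro infsum_mono_neutral) (auto simp: g_def summable_on_union)
    qed
    ultimately have "infsum g B \<le> e" using F(2) by (auto simp: dist_real_def)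
    moreover have "norm (infsum a B) \<le> infsum g B"
    proof -
      have aBs: "(\<lambda>k. norm (a k)) summable_on B" using gB by (simp add: g_def[abs_def])
      show ?thesis using norm_infsum_bound[OF aBs] by (simp add: g_def[abs_def])
    qed
    ultimately show ?thesis using eq by (simp add: norm_minus_commute)
  qed
  show ?thesis
  proof (rule ccontr)
    assume "a p \<noteq> (if p = 0 then 1 else 0)"
    hence pos: "norm (a p - (if p = 0 then 1 else 0)) > 0" by simp
    from bound[OF half_gt_zero[OF pos]] pos show False by linarith
  qed
qed


lemma cube_ibox:
  fixes x :: "real ^ 'd" and n :: "int ^ 'd"
  shows "x + rvec n \<in> cube N \<longleftrightarrow> n \<in> ibox (\<chi> i. \<lceil>- x $ i\<rceil>) N"
proof -
  have "0 \<le> x $ i + real_of_int (n $ i) \<and> x $ i + real_of_int (n $ i) < real N \<longleftrightarrow>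
        \<lceil>- x $ i\<rceil> \<le> n $ i \<and> n $ i < \<lceil>- x $ i\<rceil> + int N" for i
  proof -
    have 1: "\<lceil>- x $ i\<rceil> \<le> n $ i \<longleftrightarrow> - x $ i \<le> real_of_int (n $ i)" by (rule ceiling_le_iff)
    have 2: "n $ i - int N < \<lceil>- x $ i\<rceil> \<longleftrightarrow> real_of_int (n $ i - int N) < - x $ i" by (rule less_ceiling_iff)
    show ?thesis using 1 2 by auto
  qed
  thus ?thesis by (simp add: cube_def ibox_def rvec_def)
qed

lemma S_eq:
  fixes P :: "complex ^ 'd \<Rightarrow> complex" and x :: "real ^ 'd"
  shows "(\<Sum>\<^sub>\<infinity>n :: int ^ 'd. P (cvec (x + rvec n)) * indicator (cube N) (x + rvec n))
       = (\<Sum>n\<in>ibox (\<chi> i. \<lceil>- x $ i\<rceil>) N. P (cvec (x + rvec n)))"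
proof (rule infsumI)
  let ?I = "ibox (\<chi> i. \<lceil>- x $ i\<rceil>) N"
  have "((\<lambda>n. P (cvec (x + rvec n))) has_sum (\<Sum>n\<in>?I. P (cvec (x + rvec n)))) ?I"
    by (rule has_sum_finite[OF finite_ibox])
  moreover have "((\<lambda>n. P (cvec (x + rvec n)) * indicator (cube N) (x + rvec n)) has_sum (\<Sum>n\<in>?I. P (cvec (x + rvec n)))) UNIV
     \<longleftrightarrow> ((\<lambda>n. P (cvec (x + rvec n))) has_sum (\<Sum>n\<in>?I. P (cvec (x + rvec n)))) ?I"
    by (rule has_sum_cong_neutral) (auto simp: cube_ibox indicator_def)
  ultimately show "((\<lambda>n. P (cvec (x + rvec n)) * indicator (cube N) (x + rvec n)) has_sum (\<Sum>n\<in>?I. P (cvec (x + rvec n)))) UNIV"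
    by blast
qed

lemma key:
  fixes P :: "complex ^ 'd \<Rightarrow> complex" and c :: "int ^ 'd \<Rightarrow> complex" and x :: "real ^ 'd"
  assumes N: "N > 0" and h: "\<And>x. ((\<lambda>k. c k * fchar N k x) has_sum P (cvec x)) UNIV"
  shows "((\<lambda>k. c k * fchar N k x * (if \<forall>i. int N dvd k $ i then of_nat N ^ CARD('d) else 0)) has_sum
          (\<Sum>\<^sub>\<infinity>n :: int ^ 'd. P (cvec (x + rvec n)) * indicator (cube N) (x + rvec n))) UNIV"
proof -
  let ?I = "ibox (\<chi> i. \<lceil>- x $ i\<rceil>) N"
  have "((\<lambda>k. \<Sum>n\<in>?I. c k * fchar N k (x + rvec n)) has_sum (\<Sum>n\<in>?I. P (cvec (x + rvec n)))) UNIV"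
    by (rule has_sum_finsum[OF finite_ibox h])
  moreover have "(\<Sum>n\<in>?I. c k * fchar N k (x + rvec n))
      = c k * fchar N k x * (if \<forall>i. int N dvd k $ i then of_nat N ^ CARD('d) else 0)" for k
    by (simp only: fchar_add_x grid_sum[OF N] flip: sum_distrib_left mult.assoc)
  ultimately show ?thesis by (simp add: S_eq)
qed

theorem corollary2p3:
  fixes P :: "complex ^ 'd \<Rightarrow> complex"
    and c :: "int ^ 'd \<Rightarrow> complex"
    and N :: nat
  assumes "CARD('d) \<ge> 2"
    and "N > 0"
    and "entire_fun P"
    and "lattice_periodic N P"
    and "\<And>x. ((\<lambda>k. c k * fchar N k x) has_sum P (cvec x)) UNIV"
  shows "(\<forall>x :: real ^ 'd.
            (\<Sum>\<^sub>\<infinity>n :: int ^ 'd. P (cvec (x + rvec n)) * indicator (cube N) (x + rvec n)) = 1)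
         \<longleftrightarrow> (\<forall>k :: int ^ 'd. (\<forall>i. int N dvd k $ i) \<longrightarrow>
                 c k = (if k = 0 then 1 / of_nat N ^ CARD('d) else 0))"
proof
  have N: "N > 0" by fact
  note K = key[OF N assms(5)]
  let ?D = "\<lambda>k. (if \<forall>i. int N dvd k $ i then of_nat N ^ CARD('d) else 0 :: complex)"
  have Nd: "(of_nat N ^ CARD('d) :: complex) \<noteq> 0" using N by simp
  {
    assume H: "\<forall>x :: real ^ 'd.
            (\<Sum>\<^sub>\<infinity>n :: int ^ 'd. P (cvec (x + rvec n)) * indicator (cube N) (x + rvec n)) = 1"
    define a where "a k = c k * ?D k" for k
    have ha: "((\<lambda>k. a k * fchar N k x) has_sum 1) UNIV" for x
      using K[of x] H unfolding a_def by (simp add: mult_ac)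
    show "\<forall>k :: int ^ 'd. (\<forall>i. int N dvd k $ i) \<longrightarrow>
                 c k = (if k = 0 then 1 / of_nat N ^ CARD('d) else 0)"
    proof (intro allI impI)
      fix k :: "int ^ 'd" assume dk: "\<forall>i. int N dvd k $ i"
      from uniq[OF N ha, of k] dk have "c k * of_nat N ^ CARD('d) = (if k = 0 then 1 else 0)"
        by (simp add: a_def)
      thus "c k = (if k = 0 then 1 / of_nat N ^ CARD('d) else 0)" using Nd
        by (auto simp: field_simps split: if_splits)
    qed
  }
  {
    assume H: "\<forall>k :: int ^ 'd. (\<forall>i. int N dvd k $ i) \<longrightarrow>
                 c k = (if k = 0 then 1 / of_nat N ^ CARD('d) else 0)"
    show "\<forall>x :: real ^ 'd.
            (\<Sum>\<^sub>\<infinity>n :: int ^ 'd. P (cvec (x + rvec n)) * indicator (cube N) (x + rvec n)) = 1"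
    proof
      fix x :: "real ^ 'd"
      have eq: "c k * fchar N k x * ?D k = (if k = 0 then 1 else 0)" for k
        using H[rule_format, of k] Nd by (auto simp: fchar_zero_k)
      have "((\<lambda>k :: int ^ 'd. (if k = 0 then 1 else 0) :: complex) has_sum 1) UNIV"
      proof -
        have "((\<lambda>k :: int ^ 'd. (if k = 0 then 1 else 0) :: complex) has_sum 1) UNIV \<longleftrightarrow> ((\<lambda>k. 1 :: complex) has_sum 1) {0 :: int ^ 'd}"
          by (rule has_sum_cong_neutral) auto
        moreover have "((\<lambda>k. 1 :: complex) has_sum 1) {0 :: int ^ 'd}"
          using has_sum_finite[of "{0 :: int ^ 'd}" "\<lambda>k. 1 :: complex"] by simp
        ultimately show ?thesis by blast
      qed
      with K[of x] show "(\<Sum>\<^sub>\<infinity>n :: int ^ 'd. P (cvec (x + rvec n)) * indicator (cube N) (x + rvec n)) = 1"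
        unfolding eq by (rule has_sum_unique)
    qed
  }
qed

end
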